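(* Let $K\ge 2$, $k\ge 2$ and $n\ge1$ be integers, let $\gamma>0$, and let $C_1\subseteq[K]^n$ be a code (with at least two codewords) with $\mathrm{LCS}(C_1)=\gamma n$. Then there exist an integer $T=T(K,\gamma,k)$ satisfying $T\le 32\cdot(2k/\gamma)^K$ and an injective map $\tau\colon[K]\to[k]^T$ such that the code $C_2\subseteq[k]^N$, $N=nT$, obtained by replacing each symbol of each codeword of $C_1$ by its image under $\tau$, has the following property: if $s$ is a common subsequence between two distinct codewords $c,\tilde c\in C_2$, then \[\operatorname{span} s\ \ge\ (k+1)\operatorname{len} s-4\gamma kN.\] In particular, $\mathrm{LCS}(C_2)\le\frac{2+4\gamma k}{k+1}N<\left(\frac{2}{k+1}+4\gamma\right)N$.
   Context: $[k]=\{1,\dots,k\}$. Symbols in words are treated as distinguishable positions. A subsequence of a word $w$ is obtained by deleting symbols; a subword is a subsequence of consecutive symbols. The span $\operatorname{span}_w w'$ of a subsequence $w'$ of $w$ is the length of the shortest subword of $w$ containing $w'$. A common subsequence of words $w_1,w_2$ is a pair $s=(w_1',w_2')$ of subsequences of $w_1$ and $w_2$ respectively that are equal as words; $\operatorname{len} s$ is their common length and $\operatorname{span} s=\operatorname{span}_{w_1}w_1'+\operatorname{span}_{w_2}w_2'$. $\mathrm{LCS}(w_1,w_2)$ is the maximum length of a common subsequence, and $\mathrm{LCS}(C)=\max_{c_1\ne c_2\in C}\mathrm{LCS}(c_1,c_2)$ for a code $C$. *)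

theory Defs
  imports Complex_Main
begin

text \<open>Words are lists; a subsequence of a word w is given by the set of its
  positions I \<subseteq> {..<length w} (positions are distinguishable), the subsequence
  itself being nths w I.\<close>

definition span_pos :: "nat set \<Rightarrow> nat" where
  "span_pos I = (if I = {} then 0 else Max I - Min I + 1)"

definition common_subseq :: "'a list \<Rightarrow> 'a list \<Rightarrow> nat set \<Rightarrow> nat set \<Rightarrow> bool" where
  "common_subseq w1 w2 I J \<longleftrightarrow>
     I \<subseteq> {..<length w1} \<and> J \<subseteq> {..<length w2} \<and> nths w1 I = nths w2 J"

definition cs_len :: "nat set \<Rightarrow> nat set \<Rightarrow> nat" where
  "cs_len I J = card I"

definition cs_span :: "nat set \<Rightarrow> nat set \<Rightarrow> nat" where
  "cs_span I J = span_pos I + span_pos J"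

definition LCS :: "'a list \<Rightarrow> 'a list \<Rightarrow> nat" where
  "LCS w1 w2 = Max {cs_len I J | I J. common_subseq w1 w2 I J}"

definition LCS_code :: "'a list set \<Rightarrow> nat" where
  "LCS_code C = Max {LCS c1 c2 | c1 c2. c1 \<in> C \<and> c2 \<in> C \<and> c1 \<noteq> c2}"

definition concat_code :: "('a \<Rightarrow> 'b list) \<Rightarrow> 'a list set \<Rightarrow> 'b list set" where
  "concat_code \<tau> C = (\<lambda>c. concat (map \<tau> c)) ` C"

end

theory Submission
  imports Defs
begin

lemma core_step:
  fixes u u' v v' r R k :: nat
  assumes uu: "u < u'" and vv: "v < v'" and r: "r > 0" and R: "R > 0" and k: "k \<ge> 1"
   and s1: "(u div r) mod k = (v div R) mod k" and s2: "(u' div r) mod k = (v' div R) mod k"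
  shows "(u'-u)+(v'-v) + (k-1)*(u' mod r) + (k-1)*r*(v' div R) \<ge> k+1 + (k-1)*(u mod r) + (k-1)*r*(v div R)"
proof -
  have vd: "v div R \<le> v' div R" using vv by (simp add: div_le_mono)
  have um: "u mod r + 1 \<le> r" using r by (simp add: Suc_le_eq)
  have um2: "(k-1)*(u mod r + 1) \<le> (k-1)*r" using um by (rule mult_le_mono2)
  show ?thesis
  proof (cases "v div R < v' div R")
    case True
    then have "(k-1)*r*(v div R + 1) \<le> (k-1)*r*(v' div R)" by (intro mult_le_mono2) simp
    then have "(k-1)*r*(v div R) + (k-1)*r \<le> (k-1)*r*(v' div R)" by (simp add: distrib_left)
    moreover have "(k-1)*(u mod r) + (k-1) \<le> (k-1)*r" using um2 by (simp add: distrib_left)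
    ultimately show ?thesis using uu vv k by linarith
  next
    case False
    then have eqv0: "v div R = v' div R" using vd by simp
    then have eqv: "(k-1)*r*(v div R) = (k-1)*r*(v' div R)" by simp
    have su: "(u div r) mod k = (u' div r) mod k" using s1 s2 eqv0 by simp
    have ud: "u div r \<le> u' div r" using uu by (simp add: div_le_mono)
    have u1: "u = u div r * r + u mod r" by simp
    have u2: "u' = u' div r * r + u' mod r" by simp
    show ?thesis
    proof (cases "u div r = u' div r")
      case True
      then have "u div r * r = u' div r * r" by simp
      then have "u' mod r = u mod r + (u' - u)" using u1 u2 uu by linarith
      then have "(k-1)*(u' mod r) = (k-1)*(u mod r) + (k-1)*(u'-u)" by (simp add: distrib_left)
      moreover have "k \<le> (u'-u) + (k-1)*(u'-u)"
      proof -
        have "(k-1)*1 \<le> (k-1)*(u'-u)" using uu by (intro mult_le_mono2) simp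
        then show ?thesis using uu k by linarith
      qed
      ultimately show ?thesis using eqv vv by linarith
    next
      case False
      then have lt: "u div r < u' div r" using ud by simp
      have "k dvd (u' div r - u div r)" using mod_eq_dvd_iff_nat[OF ud, of k] su by simp
      then have "k \<le> u' div r - u div r" using lt by (intro dvd_imp_le) auto
      then have "u div r + k \<le> u' div r" using lt by linarith
      then have "(u div r + k) * r \<le> u' div r * r" by (rule mult_le_mono1)
      then have "u div r * r + k * r \<le> u' div r * r" by (simp add: distrib_right)
      moreover have "u' div r * r \<le> u'" by simp
      ultimately have "u div r * r + k * r \<le> u'" by linarith
      moreover have "k*(u mod r) + k \<le> k*r" using mult_le_mono2[OF um, of k] by (simp add: distrib_left)
      moreover have "(k-1)*(u mod r) + (u mod r) = k * (u mod r)" using k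
        by (simp add: algebra_simps)
      ultimately show ?thesis using eqv vv u1 by linarith
    qed
  qed
qed


lemma nths_as_map_filter: "nths w I = map (nth w) (filter (\<lambda>i. i \<in> I) [0..<length w])"
proof -
  have z: "zip w [0..<length w] = map (\<lambda>i. (w!i, i)) [0..<length w]"
    by (rule nth_equalityI) auto
  have "nths w I = map fst (filter (\<lambda>p. snd p \<in> I) (map (\<lambda>i. (w!i, i)) [0..<length w]))"
    unfolding nths_def z ..
  also have "\<dots> = map fst (map (\<lambda>i. (w!i, i)) (filter (\<lambda>i. i \<in> I) [0..<length w]))"
    by (simp only: filter_map o_def snd_conv)
  also have "\<dots> = map (nth w) (filter (\<lambda>i. i \<in> I) [0..<length w])"
    by (simp only: map_map o_def fst_conv)
  finally show ?thesis .
qed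

lemma filter_upt_sorted:
  assumes "I \<subseteq> {..<m}"
  shows "filter (\<lambda>i. i \<in> I) [0..<m] = sorted_list_of_set I"
proof -
  have fin: "finite I" using assms finite_subset by blast
  show ?thesis
  proof (rule sorted_distinct_set_unique)
    show "sorted (filter (\<lambda>i. i \<in> I) [0..<m])" by (rule sorted_wrt_filter) simp
    show "distinct (filter (\<lambda>i. i \<in> I) [0..<m])" by simp
    show "sorted (sorted_list_of_set I)" by simp
    show "distinct (sorted_list_of_set I)" by simp
    show "set (filter (\<lambda>i. i \<in> I) [0..<m]) = set (sorted_list_of_set I)" using assms fin by auto
  qed
qed

lemma nths_sorted_list:
  assumes "I \<subseteq> {..<length w}"
  shows "nths w I = map (nth w) (sorted_list_of_set I)"
  using nths_as_map_filter filter_upt_sorted[OF assms] by metis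

definition spairs :: "(nat \<times> nat) list \<Rightarrow> bool" where
  "spairs ps = sorted_wrt (\<lambda>p q. fst p < fst q \<and> snd p < snd q) ps"

lemma spairs_common:
  assumes "spairs ps" "\<forall>(x,y)\<in>set ps. x < length w1 \<and> y < length w2 \<and> w1!x = w2!y"
  shows "common_subseq w1 w2 (set (map fst ps)) (set (map snd ps)) \<and> cs_len (set (map fst ps)) (set (map snd ps)) = length ps"
proof -
  have s1: "sorted_wrt (<) (map fst ps)" using assms(1) unfolding spairs_def
    by (auto simp: sorted_wrt_map elim: sorted_wrt_mono_rel[rotated])
  have s2: "sorted_wrt (<) (map snd ps)" using assms(1) unfolding spairs_def
    by (auto simp: sorted_wrt_map elim: sorted_wrt_mono_rel[rotated])
  have l1: "sorted_list_of_set (set (map fst ps)) = map fst ps"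
    using s1 strict_sorted_iff by (intro sorted_distinct_set_unique) auto
  have l2: "sorted_list_of_set (set (map snd ps)) = map snd ps"
    using s2 strict_sorted_iff by (intro sorted_distinct_set_unique) auto
  have sub1: "set (map fst ps) \<subseteq> {..<length w1}" using assms(2) by auto
  have sub2: "set (map snd ps) \<subseteq> {..<length w2}" using assms(2) by auto
  have eq: "map (nth w1) (map fst ps) = map (nth w2) (map snd ps)"
    using assms(2) by (auto simp: list_eq_iff_nth_eq)
  have "distinct (map fst ps)" using s1 strict_sorted_iff by blast
  then have "card (set (map fst ps)) = length ps" using distinct_card by fastforce
  then show ?thesis unfolding common_subseq_def cs_len_def
    using sub1 sub2 nths_sorted_list[OF sub1] nths_sorted_list[OF sub2] l1 l2 eq by simp
qed

lemma cs_len_le: "common_subseq w1 w2 I J \<Longrightarrow> cs_len I J \<le> length w1"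
proof -
  assume "common_subseq w1 w2 I J"
  then have "I \<subseteq> {..<length w1}" unfolding common_subseq_def by simp
  then have "card I \<le> card {..<length w1}" by (intro card_mono) auto
  then show ?thesis unfolding cs_len_def by simp
qed

lemma LCS_fin: "finite {cs_len I J | I J. common_subseq w1 w2 I J}"
proof -
  have "{cs_len I J | I J. common_subseq w1 w2 I J} \<subseteq> {..length w1}" using cs_len_le by auto
  then show ?thesis using finite_subset by blast
qed

lemma LCS_ne: "{cs_len I J | I J. common_subseq w1 w2 I J} \<noteq> {}"
proof -
  have "common_subseq w1 w2 {} {}" unfolding common_subseq_def by simp
  then show ?thesis by blast
qed

lemma LCS_ge: "common_subseq w1 w2 I J \<Longrightarrow> cs_len I J \<le> LCS w1 w2"
  unfolding LCS_def using LCS_fin by (intro Max_ge) auto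

lemma LCS_le: "LCS w1 w2 \<le> length w1"
proof -
  have "LCS w1 w2 \<in> {cs_len I J | I J. common_subseq w1 w2 I J}"
    unfolding LCS_def using LCS_fin LCS_ne by (rule Max_in)
  then show ?thesis using cs_len_le by auto
qed

lemma LCS_bound:
  assumes "\<And>I J. common_subseq w1 w2 I J \<Longrightarrow> real (cs_len I J) \<le> B"
  shows "real (LCS w1 w2) \<le> B"
proof -
  have "LCS w1 w2 \<in> {cs_len I J | I J. common_subseq w1 w2 I J}"
    unfolding LCS_def using LCS_fin LCS_ne by (rule Max_in)
  then show ?thesis using assms by auto
qed

lemma LCS_code_fin: "finite C \<Longrightarrow> finite {LCS c1 c2 | c1 c2. c1 \<in> C \<and> c2 \<in> C \<and> c1 \<noteq> c2}"
proof -
  assume "finite C"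
  then have "finite ((\<lambda>(c1,c2). LCS c1 c2) ` (C \<times> C))" by simp
  moreover have "{LCS c1 c2 | c1 c2. c1 \<in> C \<and> c2 \<in> C \<and> c1 \<noteq> c2} \<subseteq> (\<lambda>(c1,c2). LCS c1 c2) ` (C \<times> C)" by auto
  ultimately show ?thesis using finite_subset by blast
qed

lemma LCS_code_ge: "finite C \<Longrightarrow> c1 \<in> C \<Longrightarrow> c2 \<in> C \<Longrightarrow> c1 \<noteq> c2 \<Longrightarrow> LCS c1 c2 \<le> LCS_code C"
  unfolding LCS_code_def by (intro Max_ge LCS_code_fin) auto

lemma LCS_code_bound:
  assumes "finite C" "c1 \<in> C" "c2 \<in> C" "c1 \<noteq> c2"
    "\<And>d1 d2. d1 \<in> C \<Longrightarrow> d2 \<in> C \<Longrightarrow> d1 \<noteq> d2 \<Longrightarrow> real (LCS d1 d2) \<le> B"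
  shows "real (LCS_code C) \<le> B"
proof -
  have "LCS_code C \<in> {LCS c1 c2 | c1 c2. c1 \<in> C \<and> c2 \<in> C \<and> c1 \<noteq> c2}"
    unfolding LCS_code_def using LCS_code_fin[OF assms(1)] assms(2-4) by (intro Max_in) auto
  then show ?thesis using assms(5) by auto
qed


locale prm =
  fixes k D K :: nat
  assumes k2: "k \<ge> 2" and D2: "D \<ge> 2" and K1: "K \<ge> 1"
begin

definition T :: nat where "T = k * D^K"
definition rr :: "nat \<Rightarrow> nat" where "rr a = D^(a-1)"
definition tau :: "nat \<Rightarrow> nat list" where "tau a = map (\<lambda>x. Suc ((x div rr a) mod k)) [0..<T]"
definition F :: "nat list \<Rightarrow> nat list" where "F c = concat (map tau c)"
definition P :: nat where "P = (k-1)*(k+1)*D^(K-1)"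

lemma T_pos: "T > 0" using k2 D2 unfolding T_def by simp

lemma T_eq: "T = k * D^(K-1) * D"
proof -
  obtain m where "K = Suc m" using K1 by (cases K) auto
  then show ?thesis unfolding T_def by (simp add: power_Suc2 mult.assoc)
qed

lemma length_tau[simp]: "length (tau a) = T" unfolding tau_def by simp

lemma tau_nth: "x < T \<Longrightarrow> tau a ! x = Suc ((x div rr a) mod k)" unfolding tau_def by simp

lemma set_tau: "set (tau a) \<subseteq> {1..k}"
  unfolding tau_def using k2 by (auto simp: Suc_le_eq)

lemma rr_pos: "rr a > 0" unfolding rr_def using D2 by simp

lemma rr_le: "a \<in> {1..K} \<Longrightarrow> rr a \<le> D^(K-1)"
  unfolding rr_def using D2 by (intro power_increasing) auto

lemma rr_dvd: "a \<in> {1..K} \<Longrightarrow> rr a * (T div rr a) = T"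
proof -
  assume a: "a \<in> {1..K}"
  have "D^K = D^(a-1) * D^(K-(a-1))" using a by (simp flip: power_add)
  then have "rr a dvd T" unfolding T_def rr_def by simp
  then show ?thesis by simp
qed

lemma rr_less: "a \<in> {1..K} \<Longrightarrow> b \<in> {1..K} \<Longrightarrow> rr a < rr b \<Longrightarrow> rr a * D \<le> rr b"
proof -
  assume "rr a < rr b"
  then have "a - 1 < b - 1" unfolding rr_def using D2 by (simp add: power_strict_increasing_iff)
  then have "Suc (a-1) \<le> b-1" by simp
  then have "D^(Suc (a-1)) \<le> D^(b-1)" using D2 by (intro power_increasing) auto
  then have "D^(a-1) * D \<le> D^(b-1)" by (simp add: mult.commute)
  then show ?thesis unfolding rr_def .
qed

lemma rr_inj: "a \<in> {1..K} \<Longrightarrow> b \<in> {1..K} \<Longrightarrow> rr a = rr b \<Longrightarrow> a = b"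
  unfolding rr_def using D2 by (auto simp: power_inject_exp)

lemma rr_lt_T: "a \<in> {1..K} \<Longrightarrow> rr a < T"
proof -
  assume a: "a \<in> {1..K}"
  have "rr a < 2 * D^(K-1)" using rr_le[OF a] rr_pos[of a] by linarith
  also have "\<dots> \<le> k * D^(K-1)" using k2 by simp
  also have "\<dots> \<le> k * D^(K-1) * D" using D2 by simp
  finally show ?thesis using T_eq by simp
qed

lemma tau_inj: "inj_on tau {1..K}"
proof (rule inj_onI)
  fix a b assume a: "a \<in> {1..K}" and b: "b \<in> {1..K}" and e: "tau a = tau b"
  show "a = b"
  proof (rule ccontr)
    assume ne: "a \<noteq> b"
    then have rne: "rr a \<noteq> rr b" using rr_inj a b by blast
    have key: "\<And>a b. a \<in> {1..K} \<Longrightarrow> b \<in> {1..K} \<Longrightarrow> rr a < rr b \<Longrightarrow> tau a \<noteq> tau b"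
    proof -
      fix a b assume a: "a \<in> {1..K}" and b: "b \<in> {1..K}" and lt: "rr a < rr b"
      have "tau a ! rr a = Suc (1 mod k)" using tau_nth[OF rr_lt_T[OF a]] rr_pos[of a] by simp
      moreover have "tau b ! rr a = Suc 0" using tau_nth[OF rr_lt_T[OF a]] lt by simp
      ultimately show "tau a \<noteq> tau b" using k2 by auto
    qed
    show False using key[OF a b] key[OF b a] rne e by (cases "rr a < rr b") auto
  qed
qed

lemma F_len: "(\<forall>a\<in>set c. True) \<Longrightarrow> length (F c) = length c * T"
  unfolding F_def by (induction c) auto

lemma F_nth_raw: "p < length c * T \<Longrightarrow> F c ! p = tau (c ! (p div T)) ! (p mod T)"
proof (induction c arbitrary: p)
  case Nil then show ?case by simp
next
  case (Cons a c)
  have FC: "F (a # c) = tau a @ F c" unfolding F_def by simp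
  show ?case
  proof (cases "p < T")
    case True then show ?thesis using FC by (simp add: nth_append)
  next
    case False
    then have "p - T < length c * T" using Cons.prems by simp
    then have "F c ! (p - T) = tau (c ! ((p-T) div T)) ! ((p-T) mod T)" using Cons.IH by blast
    moreover have "(p - T) div T = p div T - 1" using False T_pos by (simp add: le_div_geq)
    moreover have "(p-T) mod T = p mod T" using False by (simp add: le_mod_geq)
    moreover have "p div T \<ge> 1" using False T_pos by (simp add: le_div_geq)
    moreover have "(a#c) ! (p div T) = c ! (p div T - 1)" using \<open>p div T \<ge> 1\<close> by (cases "p div T") auto
    moreover have "F (a#c) ! p = F c ! (p - T)" using FC False by (simp add: nth_append)
    ultimately show ?thesis by simp
  qed
qed

lemma F_nth: "p < length c * T \<Longrightarrow> F c ! p = Suc (((p mod T) div rr (c ! (p div T))) mod k)"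
  using F_nth_raw tau_nth T_pos by simp

lemma F_set: "set (F c) \<subseteq> {1..k}"
  unfolding F_def using set_tau by auto

lemma F_inj:
  assumes "length c = length c'" "set c \<subseteq> {1..K}" "set c' \<subseteq> {1..K}" "F c = F c'"
  shows "c = c'"
proof (rule nth_equalityI)
  show "length c = length c'" by fact
  fix p assume p: "p < length c"
  have "tau (c!p) = tau (c'!p)"
  proof (rule nth_equalityI)
    show "length (tau (c!p)) = length (tau (c'!p))" by simp
    fix x assume "x < length (tau (c!p))"
    then have o: "x < T" by simp
    have q: "p*T + x < length c * T"
    proof -
      have "p*T + x < p*T + T" using o by simp
      also have "\<dots> = Suc p * T" by simp
      also have "\<dots> \<le> length c * T" using p by (intro mult_le_mono1) simp
      finally show ?thesis .
    qed
    have d: "(p*T+x) div T = p" using o T_pos by simp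
    have m: "(p*T+x) mod T = x" using o by simp
    show "tau (c!p) ! x = tau (c'!p) ! x"
      using F_nth_raw[OF q] F_nth_raw[of "p*T+x" c'] q assms(1,4) d m by simp
  qed
  moreover have "c!p \<in> {1..K}" using assms(2) p nth_mem by blast
  moreover have "c'!p \<in> {1..K}" using assms(3,1) p nth_mem by (metis subsetD)
  ultimately show "c!p = c'!p" using inj_onD[OF tau_inj] by blast
qed

end
context prm begin

definition Phi :: "nat list \<Rightarrow> nat list \<Rightarrow> nat \<Rightarrow> nat \<Rightarrow> nat" where
 "Phi c c' i j = (let r = rr (c!(i div T)); R = rr (c'!(j div T)) in
   if r < R then (k-1)*((i mod T) mod r) + (k-1)*r*((j mod T) div R)
   else if R < r then (k-1)*((j mod T) mod R) + (k-1)*R*((i mod T) div r) else 0)"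

definition err :: "nat list \<Rightarrow> nat list \<Rightarrow> nat \<Rightarrow> nat \<Rightarrow> nat \<Rightarrow> nat \<Rightarrow> nat" where
 "err c c' i j i' j' = (if i div T \<noteq> i' div T \<or> j div T \<noteq> j' div T then k-1+P
    else if c!(i div T) = c'!(j div T) then k-1 else 0)"

lemma Phi_part:
  assumes a: "a \<in> {1..K}" and b: "b \<in> {1..K}" and lt: "rr a < rr b" and u: "u < T" and v: "v < T"
  shows "(k-1)*(u mod rr a) + (k-1)*rr a*(v div rr b) \<le> P"
proof -
  have "u mod rr a < rr a" using rr_pos by simp
  then have 1: "(k-1)*(u mod rr a) \<le> (k-1)*D^(K-1)" using rr_le[OF a] by (intro mult_le_mono2) simp
  have "v div rr b \<le> T div rr b" using v by (simp add: div_le_mono)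
  then have "rr a*(v div rr b) \<le> rr a*(T div rr b)" by simp
  moreover have "rr a*(T div rr b) * D \<le> rr b * (T div rr b)"
    using rr_less[OF a b lt] by (simp add: mult.commute mult.left_commute)
  moreover have "rr b * (T div rr b) = k*D^(K-1)*D" using rr_dvd[OF b] T_eq by simp
  ultimately have "rr a*(T div rr b) * D \<le> k*D^(K-1)*D" by linarith
  then have "rr a*(T div rr b) \<le> k*D^(K-1)" using D2 by simp
  then have "rr a*(v div rr b) \<le> k*D^(K-1)" using \<open>rr a*(v div rr b) \<le> rr a*(T div rr b)\<close> by linarith
  then have 2: "(k-1)*rr a*(v div rr b) \<le> (k-1)*(k*D^(K-1))"
    by (simp add: mult.assoc)
  have "P = (k-1)*D^(K-1) + (k-1)*(k*D^(K-1))" unfolding P_def by (cases k) (simp_all add: algebra_simps)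
  then show ?thesis using 1 2 by linarith
qed

lemma Phi_le:
  assumes "set c \<subseteq> {1..K}" "set c' \<subseteq> {1..K}" "i < length c * T" "j < length c' * T"
  shows "Phi c c' i j \<le> P"
proof -
  have x: "i div T < length c" using assms(3) by (simp add: less_mult_imp_div_less)
  have y: "j div T < length c'" using assms(4) by (simp add: less_mult_imp_div_less)
  have a: "c!(i div T) \<in> {1..K}" using x assms(1) nth_mem by blast
  have b: "c'!(j div T) \<in> {1..K}" using y assms(2) nth_mem by blast
  have u: "i mod T < T" "j mod T < T" using T_pos by auto
  show ?thesis
    using Phi_part[OF a b _ u] Phi_part[OF b a _ u(2) u(1)] unfolding Phi_def Let_def by auto
qed

end
context prm begin

lemma step_ineq:
  assumes sc: "set c \<subseteq> {1..K}" and sc': "set c' \<subseteq> {1..K}"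
    and lc: "length c = n" and lc': "length c' = n"
    and ii: "i < i'" and jj: "j < j'" and i': "i' < n*T" and j': "j' < n*T"
    and m1: "F c ! i = F c' ! j" and m2: "F c ! i' = F c' ! j'"
  shows "k+1 + Phi c c' i j \<le> (i'-i)+(j'-j) + Phi c c' i' j' + err c c' i j i' j'"
proof (cases "i div T \<noteq> i' div T \<or> j div T \<noteq> j' div T")
  case True
  then have "err c c' i j i' j' = k-1+P" unfolding err_def by simp
  moreover have "Phi c c' i j \<le> P" using Phi_le[OF sc sc'] lc lc' ii jj i' j' by simp
  ultimately show ?thesis using ii jj by linarith
next
  case False
  define x where "x = i div T"
  define y where "y = j div T"
  have xi': "i' div T = x" and yj': "j' div T = y" using False x_def y_def by auto
  define a where "a = c!x"
  define b where "b = c'!y"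
  have xl: "x < n" using i' ii unfolding x_def by (simp add: less_mult_imp_div_less)
  have yl: "y < n" using j' jj unfolding y_def by (simp add: less_mult_imp_div_less)
  have a: "a \<in> {1..K}" using sc xl lc nth_mem unfolding a_def by blast
  have b: "b \<in> {1..K}" using sc' yl lc' nth_mem unfolding b_def by blast
  define u where "u = i mod T"
  define u' where "u' = i' mod T"
  define v where "v = j mod T"
  define v' where "v' = j' mod T"
  have i_eq: "i = x*T + u" unfolding x_def u_def by simp
  have i'_eq: "i' = x*T + u'" using xi' unfolding u'_def by (metis div_mult_mod_eq)
  have j_eq: "j = y*T + v" unfolding y_def v_def by simp
  have j'_eq: "j' = y*T + v'" using yj' unfolding v'_def by (metis div_mult_mod_eq)
  have uu: "u < u'" and du: "i' - i = u' - u" using i_eq i'_eq ii by auto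
  have vv: "v < v'" and dv: "j' - j = v' - v" using j_eq j'_eq jj by auto
  have s1: "(u div rr a) mod k = (v div rr b) mod k"
    using m1 F_nth[of i c] F_nth[of j c'] ii jj i' j' lc lc' unfolding u_def v_def a_def b_def x_def y_def by simp
  have s2: "(u' div rr a) mod k = (v' div rr b) mod k"
    using m2 F_nth[of i' c] F_nth[of j' c'] i' j' lc lc' xi' yj' unfolding u'_def v'_def a_def b_def by simp
  have Phi1: "Phi c c' i j = (if rr a < rr b then (k-1)*(u mod rr a) + (k-1)*rr a*(v div rr b)
     else if rr b < rr a then (k-1)*(v mod rr b) + (k-1)*rr b*(u div rr a) else 0)"
    unfolding Phi_def Let_def a_def b_def x_def y_def u_def v_def by simp
  have Phi2: "Phi c c' i' j' = (if rr a < rr b then (k-1)*(u' mod rr a) + (k-1)*rr a*(v' div rr b)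
     else if rr b < rr a then (k-1)*(v' mod rr b) + (k-1)*rr b*(u' div rr a) else 0)"
    unfolding Phi_def Let_def a_def b_def u'_def v'_def using xi' yj' by simp
  have k1: "k \<ge> 1" using k2 by simp
  show ?thesis
  proof (cases "a = b")
    case True
    then have "err c c' i j i' j' = k-1" unfolding err_def using False a_def b_def x_def y_def by simp
    moreover have "Phi c c' i j = 0" "Phi c c' i' j' = 0" using Phi1 Phi2 True by auto
    ultimately show ?thesis using ii jj k1 by linarith
  next
    case ne: False
    then have e0: "err c c' i j i' j' = 0" unfolding err_def using False a_def b_def x_def y_def by simp
    have rne: "rr a \<noteq> rr b" using rr_inj[OF a b] ne by blast
    show ?thesis
    proof (cases "rr a < rr b")
      case True
      have "(u'-u)+(v'-v) + (k-1)*(u' mod rr a) + (k-1)*rr a*(v' div rr b) \<ge> k+1 + (k-1)*(u mod rr a) + (k-1)*rr a*(v div rr b)"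
        by (rule core_step[OF uu vv rr_pos rr_pos k1 s1 s2])
      then show ?thesis using Phi1 Phi2 True e0 du dv by simp
    next
      case False
      then have lt: "rr b < rr a" using rne by simp
      have "(v'-v)+(u'-u) + (k-1)*(v' mod rr b) + (k-1)*rr b*(u' div rr a) \<ge> k+1 + (k-1)*(v mod rr b) + (k-1)*rr b*(u div rr a)"
        by (rule core_step[OF vv uu rr_pos rr_pos k1 s1[symmetric] s2[symmetric]])
      then show ?thesis using Phi1 Phi2 False lt e0 du dv by simp
    qed
  qed
qed

end
context prm begin

definition mseq :: "nat list \<Rightarrow> nat list \<Rightarrow> nat \<Rightarrow> (nat \<Rightarrow> nat) \<Rightarrow> (nat \<Rightarrow> nat) \<Rightarrow> nat \<Rightarrow> bool" where
  "mseq c c' n g h L \<longleftrightarrow> (\<forall>t. Suc t < L \<longrightarrow> g t < g (Suc t) \<and> h t < h (Suc t)) \<and>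
     (\<forall>t<L. g t < n*T \<and> h t < n*T \<and> F c ! (g t) = F c' ! (h t))"

lemma mseq_strict:
  assumes "mseq c c' n g h L" "s < t" "t < L"
  shows "g s < g t \<and> h s < h t"
  using assms(2,3)
proof (induction t)
  case 0 then show ?case by simp
next
  case (Suc t)
  have st: "g t < g (Suc t) \<and> h t < h (Suc t)" using assms(1) Suc.prems unfolding mseq_def by blast
  show ?case
  proof (cases "s = t")
    case True then show ?thesis using st by simp
  next
    case False
    then have "g s < g t \<and> h s < h t" using Suc by simp
    then show ?thesis using st by simp
  qed
qed

lemma mseq_mono:
  assumes "mseq c c' n g h L" "s \<le> t" "t < L"
  shows "g s \<le> g t \<and> h s \<le> h t"
  using mseq_strict[OF assms(1) _ assms(3), of s] assms(2) by (cases "s = t") auto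

lemma sum_ineq:
  assumes sc: "set c \<subseteq> {1..K}" and sc': "set c' \<subseteq> {1..K}"
    and lc: "length c = n" and lc': "length c' = n" and ms: "mseq c c' n g h L"
  shows "m < L \<Longrightarrow> (k+1)*m + Phi c c' (g 0) (h 0) \<le> (g m - g 0) + (h m - h 0) + Phi c c' (g m) (h m)
     + (\<Sum>t<m. err c c' (g t) (h t) (g (Suc t)) (h (Suc t)))"
proof (induction m)
  case 0 then show ?case by simp
next
  case (Suc m)
  have IH: "(k+1)*m + Phi c c' (g 0) (h 0) \<le> (g m - g 0) + (h m - h 0) + Phi c c' (g m) (h m)
     + (\<Sum>t<m. err c c' (g t) (h t) (g (Suc t)) (h (Suc t)))" using Suc by simp
  have st: "g m < g (Suc m) \<and> h m < h (Suc m)" using ms Suc.prems unfolding mseq_def by blast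
  have b: "g (Suc m) < n*T \<and> h (Suc m) < n*T \<and> F c ! (g (Suc m)) = F c' ! (h (Suc m))"
    using ms Suc.prems unfolding mseq_def by blast
  have a: "F c ! (g m) = F c' ! (h m)" using ms Suc.prems unfolding mseq_def by simp
  have step: "k+1 + Phi c c' (g m) (h m) \<le> (g (Suc m) - g m) + (h (Suc m) - h m) + Phi c c' (g (Suc m)) (h (Suc m))
      + err c c' (g m) (h m) (g (Suc m)) (h (Suc m))"
    using step_ineq[OF sc sc' lc lc'] st b a by blast
  have mo: "g 0 \<le> g m \<and> h 0 \<le> h m" using mseq_mono[OF ms, of 0 m] Suc.prems by simp
  show ?case using IH step mo st by (simp add: sum.lessThan_Suc) linarith
qed

lemma card_Suc_filter: "card {t. t < Suc m \<and> Q t} = card {t. t < m \<and> Q t} + (if Q m then 1 else 0)"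
proof -
  have "{t. t < Suc m \<and> Q t} = (if Q m then insert m {t. t < m \<and> Q t} else {t. t < m \<and> Q t})"
    by (auto simp: less_Suc_eq)
  then show ?thesis by simp
qed

lemma err_sum:
  assumes ms: "mseq c c' n g h L"
  shows "m < L \<Longrightarrow> (\<Sum>t<m. err c c' (g t) (h t) (g (Suc t)) (h (Suc t)))
     \<le> (k-1+P)*((g m div T + h m div T) - (g 0 div T + h 0 div T))
       + (k-1)*card {t. t < m \<and> c!(g t div T) = c'!(h t div T)}"
proof (induction m)
  case 0 then show ?case by simp
next
  case (Suc m)
  define B where "B = (\<lambda>t. g t div T + h t div T)"
  define cnt where "cnt = (\<lambda>m. card {t. t < m \<and> c!(g t div T) = c'!(h t div T)})"
  define e where "e = err c c' (g m) (h m) (g (Suc m)) (h (Suc m))"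
  have IH: "(\<Sum>t<m. err c c' (g t) (h t) (g (Suc t)) (h (Suc t))) \<le> (k-1+P)*(B m - B 0) + (k-1)*cnt m"
    using Suc unfolding B_def cnt_def by simp
  have st: "g m < g (Suc m) \<and> h m < h (Suc m)" using ms Suc.prems unfolding mseq_def by blast
  have d1: "g m div T \<le> g (Suc m) div T" "h m div T \<le> h (Suc m) div T" using st by (auto intro: div_le_mono)
  have mo: "g 0 \<le> g m \<and> h 0 \<le> h m" using mseq_mono[OF ms, of 0 m] Suc.prems by simp
  then have d0: "g 0 div T \<le> g m div T" "h 0 div T \<le> h m div T" by (auto intro: div_le_mono)
  have cS: "cnt (Suc m) = cnt m + (if c!(g m div T) = c'!(h m div T) then 1 else 0)"
    unfolding cnt_def by (rule card_Suc_filter)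
  have key: "e \<le> (k-1+P)*(B (Suc m) - B m) + (k-1)*(if c!(g m div T) = c'!(h m div T) then 1 else 0)"
  proof (cases "g m div T \<noteq> g (Suc m) div T \<or> h m div T \<noteq> h (Suc m) div T")
    case True
    then have "B (Suc m) - B m \<ge> 1" unfolding B_def using d1 by auto
    then have "(k-1+P)*1 \<le> (k-1+P)*(B (Suc m) - B m)" by (rule mult_le_mono2)
    then have "(k-1+P) \<le> (k-1+P)*(B (Suc m) - B m)" by simp
    moreover have "e = k-1+P" unfolding e_def err_def using True by simp
    ultimately show ?thesis by linarith
  next
    case False
    then show ?thesis unfolding e_def err_def by simp
  qed
  have "B m - B 0 + (B (Suc m) - B m) = B (Suc m) - B 0" unfolding B_def using d0 d1 by simp
  then have "(k-1+P)*(B (Suc m) - B 0) = (k-1+P)*(B m - B 0) + (k-1+P)*(B (Suc m) - B m)"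
    by (metis distrib_left)
  moreover have "(k-1)*cnt (Suc m) = (k-1)*cnt m + (k-1)*(if c!(g m div T) = c'!(h m div T) then 1 else 0)"
    using cS by (simp add: distrib_left)
  ultimately have "(\<Sum>t<Suc m. err c c' (g t) (h t) (g (Suc t)) (h (Suc t))) \<le> (k-1+P)*(B (Suc m) - B 0) + (k-1)*cnt (Suc m)"
    using IH key unfolding e_def by (simp add: sum.lessThan_Suc)
  then show ?case unfolding B_def cnt_def by simp
qed

end
context prm begin

lemma block_card:
  assumes ms: "mseq c c' n g h L" and S: "S \<subseteq> {..<L}"
  shows "card {t\<in>S. g t div T = x} \<le> T" "card {t\<in>S. h t div T = y} \<le> T"
proof -
  have injg: "inj_on g {..<L}"
  proof (rule inj_onI)
    fix s t assume "s \<in> {..<L}" "t \<in> {..<L}" "g s = g t"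
    then show "s = t" using mseq_strict[OF ms, of s t] mseq_strict[OF ms, of t s]
      by (cases s t rule: linorder_cases) auto
  qed
  have injh: "inj_on h {..<L}"
  proof (rule inj_onI)
    fix s t assume "s \<in> {..<L}" "t \<in> {..<L}" "h s = h t"
    then show "s = t" using mseq_strict[OF ms, of s t] mseq_strict[OF ms, of t s]
      by (cases s t rule: linorder_cases) auto
  qed
  have blk: "\<And>p z. p div T = z \<Longrightarrow> p \<in> {z*T..<z*T+T}"
  proof -
    fix p z :: nat assume "p div T = z"
    moreover have "p = p div T * T + p mod T" by simp
    moreover have "p mod T < T" using T_pos by simp
    ultimately show "p \<in> {z*T..<z*T+T}" by auto
  qed
  have "card {t\<in>S. g t div T = x} \<le> card {x*T..<x*T+T}"
    by (rule card_inj_on_le[where f=g]) (use S blk in \<open>auto intro: inj_on_subset[OF injg]\<close>)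
  then show "card {t\<in>S. g t div T = x} \<le> T" by simp
  have "card {t\<in>S. h t div T = y} \<le> card {y*T..<y*T+T}"
    by (rule card_inj_on_le[where f=h]) (use S blk in \<open>auto intro: inj_on_subset[OF injh]\<close>)
  then show "card {t\<in>S. h t div T = y} \<le> T" by simp
qed

lemma chain:
  assumes ms: "mseq c c' n g h L"
  shows "S \<subseteq> {..<L} \<Longrightarrow> \<exists>ps. spairs ps \<and> (\<forall>p\<in>set ps. \<exists>t\<in>S. p = (g t div T, h t div T))
           \<and> card S \<le> 2*T*length ps"
proof (induction "card S" arbitrary: S rule: less_induct)
  case less
  show ?case
  proof (cases "S = {}")
    case True
    then show ?thesis by (intro exI[of _ "[]"]) (simp add: spairs_def)
  next
    case False
    have fin: "finite S" using less.prems finite_subset by blast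
    define t0 where "t0 = Min S"
    have t0S: "t0 \<in> S" unfolding t0_def using fin False by simp
    define x where "x = g t0 div T"
    define y where "y = h t0 div T"
    define S1 where "S1 = {t\<in>S. g t div T = x \<or> h t div T = y}"
    define S2 where "S2 = S - S1"
    have "t0 \<in> S1" unfolding S1_def x_def y_def using t0S by simp
    then have "card S2 < card S" unfolding S2_def using fin t0S
      by (intro psubset_card_mono) auto
    moreover have "S2 \<subseteq> {..<L}" using less.prems unfolding S2_def by auto
    ultimately obtain ps2 where ps2: "spairs ps2" "\<forall>p\<in>set ps2. \<exists>t\<in>S2. p = (g t div T, h t div T)"
      "card S2 \<le> 2*T*length ps2" using less.hyps by blast
    have gt: "\<forall>p\<in>set ps2. x < fst p \<and> y < snd p"
    proof
      fix p assume "p \<in> set ps2"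
      then obtain t where t: "t \<in> S2" "p = (g t div T, h t div T)" using ps2(2) by blast
      have tS: "t \<in> S" and tn: "g t div T \<noteq> x" "h t div T \<noteq> y" using t(1) unfolding S2_def S1_def by auto
      have "t0 \<le> t" unfolding t0_def using fin tS by simp
      moreover have "t \<noteq> t0" using tn unfolding x_def y_def by auto
      ultimately have "t0 < t" by simp
      moreover have "t < L" using tS less.prems by auto
      ultimately have "g t0 < g t \<and> h t0 < h t" using mseq_strict[OF ms] by blast
      then have "x \<le> g t div T" "y \<le> h t div T" unfolding x_def y_def by (auto intro: div_le_mono)
      then show "x < fst p \<and> y < snd p" using tn t(2) by auto
    qed
    define ps where "ps = (x,y) # ps2"
    have sp: "spairs ps" using ps2(1) gt unfolding ps_def spairs_def by auto
    have mem: "\<forall>p\<in>set ps. \<exists>t\<in>S. p = (g t div T, h t div T)"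
      using ps2(2) t0S unfolding ps_def S2_def x_def y_def by auto
    have "S1 \<subseteq> {t\<in>S. g t div T = x} \<union> {t\<in>S. h t div T = y}" unfolding S1_def by auto
    then have "card S1 \<le> card ({t\<in>S. g t div T = x} \<union> {t\<in>S. h t div T = y})"
      using fin by (intro card_mono) auto
    also have "\<dots> \<le> card {t\<in>S. g t div T = x} + card {t\<in>S. h t div T = y}" by (rule card_Un_le)
    also have "\<dots> \<le> T + T" using block_card[OF ms less.prems] by (intro add_mono) auto
    finally have c1: "card S1 \<le> 2*T" by simp
    have "S = S1 \<union> S2" unfolding S2_def S1_def by auto
    then have "card S \<le> card S1 + card S2" by (metis card_Un_le)
    then have "card S \<le> 2*T*length ps" using c1 ps2(3) unfolding ps_def by simp
    then show ?thesis using sp mem by blast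
  qed
qed

end
context prm begin

lemma pair_bound:
  assumes sc: "set c \<subseteq> {1..K}" and sc': "set c' \<subseteq> {1..K}"
    and lc: "length c = n" and lc': "length c' = n"
    and cs: "common_subseq (F c) (F c') I J"
  shows "(k+1)*cs_len I J \<le> cs_span I J + (k-1) + P + (k-1+P)*(2*(n-1)) + (k-1)*(2*T*LCS c c')"
proof -
  have lF: "length (F c) = n*T" "length (F c') = n*T" using F_len lc lc' by auto
  have Isub: "I \<subseteq> {..<n*T}" and Jsub: "J \<subseteq> {..<n*T}" and eq: "nths (F c) I = nths (F c') J"
    using cs lF unfolding common_subseq_def by auto
  have finI: "finite I" and finJ: "finite J" using Isub Jsub finite_subset by auto
  define xs where "xs = sorted_list_of_set I"
  define js where "js = sorted_list_of_set J"
  have meq: "map (nth (F c)) xs = map (nth (F c')) js"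
    using eq nths_sorted_list[of I "F c"] nths_sorted_list[of J "F c'"] Isub Jsub lF
    unfolding xs_def js_def by simp
  define L where "L = card I"
  have lis: "length xs = L" unfolding xs_def L_def by simp
  have ljs: "length js = L" using lis meq by (metis length_map)
  have cardJ: "card J = L" using ljs unfolding js_def by simp
  have setis: "set xs = I" unfolding xs_def using finI by simp
  have setjs: "set js = J" unfolding js_def using finJ by simp
  have csl: "cs_len I J = L" unfolding cs_len_def L_def by simp
  show ?thesis
  proof (cases "L = 0")
    case True then show ?thesis using csl by simp
  next
    case False
    define g where "g = (\<lambda>t. xs!t)"
    define h where "h = (\<lambda>t. js!t)"
    have sis: "sorted_wrt (<) xs" unfolding xs_def by (rule strict_sorted_list_of_set)
    have sjs: "sorted_wrt (<) js" unfolding js_def by (rule strict_sorted_list_of_set)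
    have gI: "\<And>t. t < L \<Longrightarrow> g t \<in> I" unfolding g_def using setis lis nth_mem by blast
    have hJ: "\<And>t. t < L \<Longrightarrow> h t \<in> J" unfolding h_def using setjs ljs nth_mem by blast
    have ms: "mseq c c' n g h L"
      unfolding mseq_def
    proof (intro conjI allI impI)
      fix t assume "Suc t < L"
      then show "g t < g (Suc t)" "h t < h (Suc t)" unfolding g_def h_def
        using sorted_wrt_nth_less[OF sis, of t "Suc t"] sorted_wrt_nth_less[OF sjs, of t "Suc t"] lis ljs by auto
    next
      fix t assume t: "t < L"
      show "g t < n*T" using gI[OF t] Isub by auto
      show "h t < n*T" using hJ[OF t] Jsub by auto
      have "map (nth (F c)) xs ! t = map (nth (F c')) js ! t" using meq by simp
      then show "F c ! g t = F c' ! h t" unfolding g_def h_def using t lis ljs by simp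
    qed
    define m where "m = L - 1"
    have mL: "m < L" and Lm: "L = Suc m" unfolding m_def using False by auto
    have maxI: "Max I = g m"
    proof (rule Max_eqI[OF finI])
      fix y assume "y \<in> I"
      then obtain s where "s < L" "y = g s" using setis lis unfolding g_def by (metis in_set_conv_nth)
      then show "y \<le> g m" using mseq_mono[OF ms, of s m] mL Lm by auto
    next
      show "g m \<in> I" using gI mL by blast
    qed
    have minI: "Min I = g 0"
    proof (rule Min_eqI[OF finI])
      fix y assume "y \<in> I"
      then obtain s where "s < L" "y = g s" using setis lis unfolding g_def by (metis in_set_conv_nth)
      then show "g 0 \<le> y" using mseq_mono[OF ms, of 0 s] by auto
    next
      show "g 0 \<in> I" using gI False by blast
    qed
    have maxJ: "Max J = h m"
    proof (rule Max_eqI[OF finJ])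
      fix y assume "y \<in> J"
      then obtain s where "s < L" "y = h s" using setjs ljs unfolding h_def by (metis in_set_conv_nth)
      then show "y \<le> h m" using mseq_mono[OF ms, of s m] mL Lm by auto
    next
      show "h m \<in> J" using hJ mL by blast
    qed
    have minJ: "Min J = h 0"
    proof (rule Min_eqI[OF finJ])
      fix y assume "y \<in> J"
      then obtain s where "s < L" "y = h s" using setjs ljs unfolding h_def by (metis in_set_conv_nth)
      then show "h 0 \<le> y" using mseq_mono[OF ms, of 0 s] by auto
    next
      show "h 0 \<in> J" using hJ False by blast
    qed
    have Ine: "I \<noteq> {}" using False L_def by auto
    have Jne: "J \<noteq> {}" using False cardJ by auto
    have span: "cs_span I J = (g m - g 0 + 1) + (h m - h 0 + 1)"
      unfolding cs_span_def span_pos_def using Ine Jne maxI minI maxJ minJ by simp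
    have si: "(k+1)*m + Phi c c' (g 0) (h 0) \<le> (g m - g 0) + (h m - h 0) + Phi c c' (g m) (h m)
     + (\<Sum>t<m. err c c' (g t) (h t) (g (Suc t)) (h (Suc t)))"
      by (rule sum_ineq[OF sc sc' lc lc' ms mL])
    have es: "(\<Sum>t<m. err c c' (g t) (h t) (g (Suc t)) (h (Suc t)))
     \<le> (k-1+P)*((g m div T + h m div T) - (g 0 div T + h 0 div T))
       + (k-1)*card {t. t < m \<and> c!(g t div T) = c'!(h t div T)}"
      by (rule err_sum[OF ms mL])
    define S where "S = {t. t < m \<and> c!(g t div T) = c'!(h t div T)}"
    have SL: "S \<subseteq> {..<L}" unfolding S_def using mL by auto
    obtain ps where ps: "spairs ps" "\<forall>p\<in>set ps. \<exists>t\<in>S. p = (g t div T, h t div T)"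
      "card S \<le> 2*T*length ps" using chain[OF ms SL] by blast
    have gm: "\<And>t. t < L \<Longrightarrow> g t div T < n \<and> h t div T < n"
    proof -
      fix t assume t: "t < L"
      have "g t < n*T" "h t < n*T" using ms t unfolding mseq_def by auto
      then show "g t div T < n \<and> h t div T < n" by (simp add: less_mult_imp_div_less)
    qed
    have "\<forall>(x,y)\<in>set ps. x < length c \<and> y < length c' \<and> c!x = c'!y"
    proof (intro ballI, clarify)
      fix x y assume "(x,y) \<in> set ps"
      then obtain t where "t \<in> S" "x = g t div T" "y = h t div T" using ps(2) by blast
      then show "x < length c \<and> y < length c' \<and> c!x = c'!y" using gm[of t] lc lc' SL unfolding S_def by auto
    qed
    then have "common_subseq c c' (set (map fst ps)) (set (map snd ps)) \<and> cs_len (set (map fst ps)) (set (map snd ps)) = length ps"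
      using spairs_common[OF ps(1)] by blast
    then have "length ps \<le> LCS c c'" using LCS_ge by metis
    then have "2*T*length ps \<le> 2*T*LCS c c'" by simp
    then have cS: "card S \<le> 2*T*LCS c c'" using ps(3) by linarith
    then have e2: "(k-1)*card S \<le> (k-1)*(2*T*LCS c c')" by (rule mult_le_mono2)
    have "g m div T + h m div T \<le> 2*(n-1)" using gm[OF mL] by linarith
    then have "(g m div T + h m div T) - (g 0 div T + h 0 div T) \<le> 2*(n-1)" by linarith
    then have e1: "(k-1+P)*((g m div T + h m div T) - (g 0 div T + h 0 div T)) \<le> (k-1+P)*(2*(n-1))"
      by (rule mult_le_mono2)
    have pl: "Phi c c' (g m) (h m) \<le> P" using Phi_le[OF sc sc'] gm[OF mL] ms mL lc lc' unfolding mseq_def by auto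
    have kk: "(k+1)*L = (k+1)*m + (k+1)" using Lm by simp
    have k1: "k \<ge> 1" using k2 by simp
    show ?thesis unfolding csl using si es e1 e2 pl kk span k1 unfolding S_def by linarith
  qed
qed

end
lemma span_pos_le: "I \<subseteq> {..<m} \<Longrightarrow> span_pos I \<le> m"
proof -
  assume I: "I \<subseteq> {..<m}"
  show ?thesis
  proof (cases "I = {}")
    case True then show ?thesis unfolding span_pos_def by simp
  next
    case False
    have fin: "finite I" using I finite_subset by blast
    have "Max I \<in> I" using fin False by simp
    then have "Max I < m" using I by auto
    then show ?thesis unfolding span_pos_def using False by simp
  qed
qed

lemma T_bound_nat:
  fixes k K :: nat assumes "k \<ge> 2" "K \<ge> 1"
  shows "k * 3^K \<le> 32 * (2*k)^K"
proof -
  obtain m where K: "K = Suc m" using assms(2) by (cases K) auto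
  have "3^m \<le> (2*k)^m" using assms(1) by (intro power_mono) auto
  then have "k * 3 * 3^m \<le> k * 64 * (2*k)^m" by (intro mult_le_mono) auto
  then show ?thesis using K by (simp add: algebra_simps)
qed

theorem theorem3p2:
  fixes K k n :: nat and \<gamma> :: real and C1 :: "nat list set"
  assumes "K \<ge> 2" and "k \<ge> 2" and "n \<ge> 1" and "\<gamma> > 0"
    and "\<forall>c\<in>C1. length c = n \<and> set c \<subseteq> {1..K}"
    and "card C1 \<ge> 2"
    and "real (LCS_code C1) = \<gamma> * real n"
  shows "\<exists>(T::nat) (\<tau>::nat \<Rightarrow> nat list).
           real T \<le> 32 * (2 * real k / \<gamma>) ^ K
         \<and> inj_on \<tau> {1..K}
         \<and> (\<forall>a\<in>{1..K}. length (\<tau> a) = T \<and> set (\<tau> a) \<subseteq> {1..k})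
         \<and> (let N = n * T; C2 = concat_code \<tau> C1 in
              (\<forall>c\<in>C2. \<forall>c'\<in>C2. \<forall>I J. c \<noteq> c' \<and> common_subseq c c' I J \<longrightarrow>
                  real (cs_span I J) \<ge> real (k + 1) * real (cs_len I J) - 4 * \<gamma> * real k * real N)
            \<and> real (LCS_code C2) \<le> (2 + 4 * \<gamma> * real k) / real (k + 1) * real N
            \<and> real (LCS_code C2) < (2 / real (k + 1) + 4 * \<gamma>) * real N)"
proof -
  note K2 = assms(1) and k2 = assms(2) and n1 = assms(3) and gp = assms(4) and C1p = assms(5)
  have finC1: "finite C1" using assms(6) by (metis card.infinite not_numeral_le_zero)
  obtain c1 c2 where c12: "c1 \<in> C1" "c2 \<in> C1" "c1 \<noteq> c2"
  proof -
    have "\<not> card C1 \<le> Suc 0" using assms(6) by simp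
    then show ?thesis using that card_le_Suc0_iff_eq[OF finC1] by blast
  qed
  have "real (LCS_code C1) \<le> real n"
  proof (rule LCS_code_bound[OF finC1 c12])
    fix d1 d2 assume "d1 \<in> C1"
    then have "length d1 = n" using C1p by blast
    then show "real (LCS d1 d2) \<le> real n" using LCS_le[of d1 d2] by simp
  qed
  then have g1: "\<gamma> \<le> 1" using assms(7) n1 gp by (simp add: mult_le_cancel_right1)
  define D where "D = nat \<lceil>1/\<gamma>\<rceil> + 1"
  have ig: "1/\<gamma> \<ge> 1" using g1 gp by simp
  have Dr: "real D = real_of_int \<lceil>1/\<gamma>\<rceil> + 1" unfolding D_def using ig by simp
  have "real_of_int \<lceil>1/\<gamma>\<rceil> \<ge> 1/\<gamma>" by (rule le_of_int_ceiling)
  then have "real D \<ge> 2" using Dr ig by linarith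
  then have D2: "D \<ge> 2" by simp
  have gD: "\<gamma> * real D \<ge> 1"
  proof -
    have "real D \<ge> 1/\<gamma>" using Dr by linarith
    then have "\<gamma> * real D \<ge> \<gamma> * (1/\<gamma>)" using gp by (intro mult_left_mono) auto
    then show ?thesis using gp by simp
  qed
  have D3: "real D \<le> 3/\<gamma>"
  proof -
    have "real D \<le> 1/\<gamma> + 2" using Dr by linarith
    also have "\<dots> \<le> 1/\<gamma> + 2/\<gamma>" using g1 gp by (simp add: field_simps)
    finally show ?thesis by simp
  qed
  interpret prm k D K using k2 D2 K2 by unfold_locales auto
  define E where "E = D^(K-1)"
  have TE: "T = k*E*D" unfolding E_def by (rule T_eq)
  have PE: "P = (k-1)*(k+1)*E" unfolding E_def P_def by simp
  have E1: "E \<ge> 1" unfolding E_def using D2 by simp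
  have F_img: "concat_code tau C1 = F ` C1" unfolding concat_code_def F_def by simp
  have Tpos: "T > 0" by (rule T_pos)
  have key: "real (k-1+P) \<le> real (k+1) * \<gamma> * real T"
  proof -
    have "real (k-1+P) \<le> real (k+1) * real k * real E"
    proof -
      have "k - 1 \<le> (k+1)*E" using E1 by (metis diff_le_self le_add1 le_trans mult_le_mono2 nat_mult_1_right)
      then have "k-1+P \<le> (k+1)*E + (k-1)*(k+1)*E" using PE by simp
      also have "\<dots> = (k+1)*k*E" using k2 by (cases k) (simp_all add: algebra_simps)
      finally have "real (k-1+P) \<le> real ((k+1)*k*E)" by (simp only: of_nat_le_iff)
      then show ?thesis by (simp add: algebra_simps)
    qed
    also have "\<dots> \<le> real (k+1) * real k * real E * (\<gamma> * real D)"
      using mult_left_mono[OF gD, of "real (k+1) * real k * real E"] by simp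
    also have "\<dots> = real (k+1) * \<gamma> * real T" unfolding TE by (simp add: algebra_simps)
    finally show ?thesis .
  qed
  have main: "\<And>c c' I J. c \<in> C1 \<Longrightarrow> c' \<in> C1 \<Longrightarrow> c \<noteq> c' \<Longrightarrow> common_subseq (F c) (F c') I J \<Longrightarrow>
      real (cs_span I J) \<ge> real (k + 1) * real (cs_len I J) - 4 * \<gamma> * real k * real (n*T)"
  proof -
    fix c c' I J assume c: "c \<in> C1" and c': "c' \<in> C1" and ne: "c \<noteq> c'" and cs: "common_subseq (F c) (F c') I J"
    have nat: "(k+1)*cs_len I J \<le> cs_span I J + (k-1) + P + (k-1+P)*(2*(n-1)) + (k-1)*(2*T*LCS c c')"
      using pair_bound[OF _ _ _ _ cs] C1p c c' by blast
    have lcs: "real (LCS c c') \<le> \<gamma> * real n" using LCS_code_ge[OF finC1 c c' ne] assms(7) by simp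
    have r1: "real ((k-1) + P + (k-1+P)*(2*(n-1))) = real (k-1+P) * (2*real n - 1)"
    proof -
      have "real ((k-1) + P + (k-1+P)*(2*(n-1))) = real (k-1+P) * (2*real (n-1) + 1)"
        by (simp only: of_nat_add of_nat_mult) (simp add: algebra_simps)
      moreover have "real (n-1) = real n - 1" using n1 by (simp add: of_nat_diff)
      ultimately show ?thesis by simp
    qed
    have r2: "real (k-1+P) * (2*real n - 1) \<le> real (k+1) * \<gamma> * real T * (2*real n)"
    proof -
      have "real (k-1+P) * (2*real n - 1) \<le> real (k-1+P) * (2*real n)" by (simp add: mult_left_mono)
      also have "\<dots> \<le> real (k+1) * \<gamma> * real T * (2*real n)" using key n1 by (intro mult_right_mono) auto
      finally show ?thesis .
    qed
    have r3: "real ((k-1)*(2*T*LCS c c')) \<le> real (k-1) * 2 * real T * (\<gamma> * real n)"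
    proof -
      have "real ((k-1)*(2*T*LCS c c')) = real (k-1) * 2 * real T * real (LCS c c')" by simp
      also have "\<dots> \<le> real (k-1) * 2 * real T * (\<gamma> * real n)" using lcs by (intro mult_left_mono) auto
      finally show ?thesis .
    qed
    have r4: "real (k+1) * \<gamma> * real T * (2*real n) + real (k-1) * 2 * real T * (\<gamma> * real n)
        = 4 * \<gamma> * real k * real (n*T)" using k2 by (simp add: of_nat_diff algebra_simps)
    have "real ((k+1)*cs_len I J) \<le> real (cs_span I J) + real ((k-1) + P + (k-1+P)*(2*(n-1))) + real ((k-1)*(2*T*LCS c c'))"
      using nat by linarith
    then show "real (cs_span I J) \<ge> real (k + 1) * real (cs_len I J) - 4 * \<gamma> * real k * real (n*T)"
      using r1 r2 r3 r4 of_nat_mult[of "k+1" "cs_len I J", where 'a=real] by linarith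
  qed
  have Fne: "F c1 \<noteq> F c2" using F_inj C1p c12 by metis
  have finC2: "finite (F ` C1)" using finC1 by simp
  have Npos: "real (n*T) > 0" using n1 Tpos by simp
  have lcs2: "real (LCS_code (F ` C1)) \<le> (2 + 4 * \<gamma> * real k) / real (k + 1) * real (n*T)"
  proof (rule LCS_code_bound[OF finC2 _ _ Fne])
    show "F c1 \<in> F ` C1" "F c2 \<in> F ` C1" using c12 by auto
    fix d1 d2 assume d: "d1 \<in> F ` C1" "d2 \<in> F ` C1" "d1 \<noteq> d2"
    then obtain c c' where cc: "c \<in> C1" "c' \<in> C1" "d1 = F c" "d2 = F c'" by blast
    then have ne: "c \<noteq> c'" using d(3) by blast
    show "real (LCS d1 d2) \<le> (2 + 4 * \<gamma> * real k) / real (k + 1) * real (n*T)"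
    proof (rule LCS_bound)
      fix I J assume cs: "common_subseq d1 d2 I J"
      have lens: "length d1 = n*T" "length d2 = n*T" using cc C1p F_len by auto
      have "span_pos I \<le> n*T" "span_pos J \<le> n*T" using cs lens span_pos_le unfolding common_subseq_def by auto
      then have "cs_span I J \<le> 2 * (n*T)" unfolding cs_span_def by simp
      then have sp: "real (cs_span I J) \<le> 2 * real (n*T)" by (simp only: of_nat_le_iff of_nat_mult of_nat_numeral flip: of_nat_mult)
      have "real (cs_span I J) \<ge> real (k + 1) * real (cs_len I J) - 4 * \<gamma> * real k * real (n*T)"
        using main[OF cc(1,2) ne] cs cc by simp
      then have "real (k+1) * real (cs_len I J) \<le> (2 + 4 * \<gamma> * real k) * real (n*T)"
        using sp by (simp add: algebra_simps)
      then show "real (cs_len I J) \<le> (2 + 4 * \<gamma> * real k) / real (k + 1) * real (n*T)"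
        by (simp add: field_simps)
    qed
  qed
  have strict: "(2 + 4 * \<gamma> * real k) / real (k + 1) * real (n*T) < (2 / real (k + 1) + 4 * \<gamma>) * real (n*T)"
  proof -
    have "(2 + 4 * \<gamma> * real k) / real (k + 1) < 2 / real (k + 1) + 4 * \<gamma>"
    proof -
      have "0 \<le> \<gamma> * (real k * 4)" using gp by simp
      then have "0 < \<gamma> * 4 + \<gamma> * (real k * 4)" using gp by linarith
      then show ?thesis using gp by (simp add: field_simps)
    qed
    then show ?thesis using Npos by (intro mult_strict_right_mono) auto
  qed
  have Tb: "real T \<le> 32 * (2 * real k / \<gamma>) ^ K"
  proof -
    have "real T = real k * real D ^ K" unfolding T_def by simp
    also have "\<dots> \<le> real k * (3/\<gamma>)^K" using D3 by (intro mult_left_mono power_mono) auto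
    also have "\<dots> = real (k * 3^K) / \<gamma>^K" by (simp add: power_divide)
    also have "\<dots> \<le> real (32 * (2*k)^K) / \<gamma>^K"
      using T_bound_nat[OF k2] K2 gp by (intro divide_right_mono) (simp_all only: of_nat_le_iff, auto)
    also have "\<dots> = 32 * (2 * real k / \<gamma>) ^ K" by (simp add: power_divide)
    finally show ?thesis .
  qed
  have all: "\<forall>d\<in>F ` C1. \<forall>d'\<in>F ` C1. \<forall>I J. d \<noteq> d' \<and> common_subseq d d' I J \<longrightarrow>
      real (cs_span I J) \<ge> real (k + 1) * real (cs_len I J) - 4 * \<gamma> * real k * real (n*T)"
  proof (intro ballI allI impI)
    fix d d' I J assume d: "d \<in> F ` C1" "d' \<in> F ` C1" and h: "d \<noteq> d' \<and> common_subseq d d' I J"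
    then obtain c c' where cc: "c \<in> C1" "c' \<in> C1" "d = F c" "d' = F c'" by blast
    then have "c \<noteq> c'" using h by blast
    then show "real (cs_span I J) \<ge> real (k + 1) * real (cs_len I J) - 4 * \<gamma> * real k * real (n*T)"
      using main[OF cc(1,2)] h cc by blast
  qed
  have lt2: "real (LCS_code (F ` C1)) < (2 / real (k + 1) + 4 * \<gamma>) * real (n*T)"
    using lcs2 strict by linarith
  have ts: "\<forall>a\<in>{1..K}. length (tau a) = T \<and> set (tau a) \<subseteq> {1..k}" using set_tau by simp
  show ?thesis
    apply (rule exI[of _ T], rule exI[of _ tau])
    unfolding Let_def F_img
    using Tb tau_inj ts all lcs2 lt2
    by blast
qed
end
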